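(* Let $(\Omega,\mathcal{F})$ be a measurable space, $\mathcal{P}$ a nonempty set of probability measures on $(\Omega,\mathcal{F})$, and $\hat{\mathbb{E}}[Z]=\sup_{P\in\mathcal{P}}E_P[Z]$. Let $X,Y$ be random variables with $\hat{\mathbb{E}}[X^2]+\hat{\mathbb{E}}[Y^2]<\infty$. Then (1) $\overline{C}(X,Y)=\sup_{P\in\mathrm{co}(\mathcal{P})}C_P(X,Y)$; (2) $\underline{C}(X,Y)=\inf_{P\in\mathrm{co}(\mathcal{P})}C_P(X,Y)$.
   Context: $\mathrm{co}(\mathcal{P})$ denotes the convex hull of $\mathcal{P}$ (finite convex combinations of elements of $\mathcal{P}$). For a random variable $Z$ with $\hat{\mathbb{E}}[Z^2]<\infty$: upper mean $\overline{\mu}_Z=\hat{\mathbb{E}}[Z]$, lower mean $\underline{\mu}_Z=-\hat{\mathbb{E}}[-Z]$, and $M_Z=[\underline{\mu}_Z,\overline{\mu}_Z]$. The upper covariance is $\overline{C}(X,Y)=\max_{\mu_2\in M_Y}\min_{\mu_1\in M_X}\hat{\mathbb{E}}[(X-\mu_1)(Y-\mu_2)]$ and the lower covariance is $\underline{C}(X,Y)=\min_{\mu_2\in M_Y}\max_{\mu_1\in M_X}\left(-\hat{\mathbb{E}}[-(X-\mu_1)(Y-\mu_2)]\right)$. For a probability measure $P$, $C_P(X,Y)=E_P[(X-E_P[X])(Y-E_P[Y])]$. *)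

theory Defs
  imports "HOL-Probability.Probability"
begin

definition upper_exp :: "'a measure set \<Rightarrow> ('a \<Rightarrow> real) \<Rightarrow> real" where
  "upper_exp Ps Z = (SUP P\<in>Ps. integral\<^sup>L P Z)"

definition lower_exp :: "'a measure set \<Rightarrow> ('a \<Rightarrow> real) \<Rightarrow> real" where
  "lower_exp Ps Z = - upper_exp Ps (\<lambda>\<omega>. - Z \<omega>)"

definition mean_interval :: "'a measure set \<Rightarrow> ('a \<Rightarrow> real) \<Rightarrow> real set" where
  "mean_interval Ps Z = {lower_exp Ps Z .. upper_exp Ps Z}"

text \<open>Upper covariance: max over mu2 in M_Y of min over mu1 in M_X of E^[(X-mu1)(Y-mu2)].
  The extrema are attained (continuity on compact intervals), so Sup/Inf are used.\<close>
definition upper_cov :: "'a measure set \<Rightarrow> ('a \<Rightarrow> real) \<Rightarrow> ('a \<Rightarrow> real) \<Rightarrow> real" where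
  "upper_cov Ps X Y = (SUP \<mu>2\<in>mean_interval Ps Y. INF \<mu>1\<in>mean_interval Ps X.
      upper_exp Ps (\<lambda>\<omega>. (X \<omega> - \<mu>1) * (Y \<omega> - \<mu>2)))"

definition lower_cov :: "'a measure set \<Rightarrow> ('a \<Rightarrow> real) \<Rightarrow> ('a \<Rightarrow> real) \<Rightarrow> real" where
  "lower_cov Ps X Y = (INF \<mu>2\<in>mean_interval Ps Y. SUP \<mu>1\<in>mean_interval Ps X.
      - upper_exp Ps (\<lambda>\<omega>. - ((X \<omega> - \<mu>1) * (Y \<omega> - \<mu>2))))"

definition cov_P :: "'a measure \<Rightarrow> ('a \<Rightarrow> real) \<Rightarrow> ('a \<Rightarrow> real) \<Rightarrow> real" where
  "cov_P P X Y = integral\<^sup>L P (\<lambda>\<omega>. (X \<omega> - integral\<^sup>L P X) * (Y \<omega> - integral\<^sup>L P Y))"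

definition mixture :: "'a measure \<Rightarrow> 'a measure set \<Rightarrow> ('a measure \<Rightarrow> real) \<Rightarrow> 'a measure" where
  "mixture M S w = measure_of (space M) (sets M)
      (\<lambda>A. \<Sum>P\<in>S. ennreal (w P) * emeasure P A)"

definition measure_co :: "'a measure \<Rightarrow> 'a measure set \<Rightarrow> 'a measure set" where
  "measure_co M Ps = {mixture M S w | S w. finite S \<and> S \<noteq> {} \<and> S \<subseteq> Ps
      \<and> (\<forall>P\<in>S. 0 \<le> w P) \<and> sum w S = 1}"

end

theory Submission
  imports Defs
begin



lemma mixture_sets:
  shows "sets (mixture M S w) = sets M" "space (mixture M S w) = space M"
  unfolding mixture_def by (simp_all add: sets.space_closed)

lemma mixture_emeasure:
  assumes fin: "finite S"
    and sub: "\<And>P. P \<in> S \<Longrightarrow> sets P = sets M"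
    and A: "A \<in> sets M"
  shows "emeasure (mixture M S w) A = (\<Sum>P\<in>S. ennreal (w P) * emeasure P A)"
  unfolding mixture_def
proof (rule emeasure_measure_of_sigma[OF _ _ _ A])
  show "sigma_algebra (space M) (sets M)" by (rule sets.sigma_algebra_axioms)
  show "positive (sets M) (\<lambda>A. \<Sum>P\<in>S. ennreal (w P) * emeasure P A)"
    by (simp add: positive_def)
  show "countably_additive (sets M) (\<lambda>A. \<Sum>P\<in>S. ennreal (w P) * emeasure P A)"
  proof (rule countably_additiveI)
    fix B :: "nat \<Rightarrow> 'a set"
    assume B: "range B \<subseteq> sets M" "disjoint_family B" "\<Union> (range B) \<in> sets M"
    have "(\<Sum>i. \<Sum>P\<in>S. ennreal (w P) * emeasure P (B i))
        = (\<Sum>P\<in>S. \<Sum>i. ennreal (w P) * emeasure P (B i))"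
      by (rule suminf_sum) (rule summableI)
    also have "\<dots> = (\<Sum>P\<in>S. ennreal (w P) * emeasure P (\<Union> (range B)))"
    proof (rule sum.cong[OF refl])
      fix P assume "P \<in> S"
      then have "range B \<subseteq> sets P" using B sub by auto
      then show "(\<Sum>i. ennreal (w P) * emeasure P (B i)) = ennreal (w P) * emeasure P (\<Union> (range B))"
        using B by (simp add: ennreal_suminf_cmult suminf_emeasure)
    qed
    finally show "(\<Sum>i. \<Sum>P\<in>S. ennreal (w P) * emeasure P (B i)) = (\<Sum>P\<in>S. ennreal (w P) * emeasure P (\<Union> (range B)))" .
  qed
qed



lemma mixture_nn_integral:
  assumes fin: "finite S"
    and sub: "\<And>P. P \<in> S \<Longrightarrow> sets P = sets M"
    and g: "g \<in> borel_measurable M"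
  shows "nn_integral (mixture M S w) g = (\<Sum>P\<in>S. ennreal (w P) * nn_integral P g)"
  using g
proof (induction rule: borel_measurable_induct)
  case (cong f g)
  have eq: "\<And>x. x \<in> space M \<Longrightarrow> f x = g x" by (fact cong.hyps(3))
  have "nn_integral (mixture M S w) f = nn_integral (mixture M S w) g"
    by (rule nn_integral_cong) (metis eq mixture_sets(2))
  moreover have "nn_integral P f = nn_integral P g" if "P \<in> S" for P
    by (rule nn_integral_cong) (metis eq sub[OF that] sets_eq_imp_space_eq)
  ultimately show ?case using cong.IH by (metis (no_types, lifting) sum.cong)
next
  case (set A)
  have "nn_integral (mixture M S w) (indicator A) = emeasure (mixture M S w) A"
    using set by (simp add: mixture_sets)
  also have "\<dots> = (\<Sum>P\<in>S. ennreal (w P) * emeasure P A)"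
    by (rule mixture_emeasure[OF fin sub set])
  also have "\<dots> = (\<Sum>P\<in>S. ennreal (w P) * nn_integral P (indicator A))"
    using set sub by (intro sum.cong refl) simp
  finally show ?case .
next
  case (mult u c)
  have mQ: "u \<in> borel_measurable (mixture M S w)"
    using mult.hyps(2) measurable_cong_sets[OF mixture_sets(1) refl] by blast
  have mP: "u \<in> borel_measurable P" if "P \<in> S" for P
    using mult.hyps(2) measurable_cong_sets[OF sub[OF that] refl] by blast
  have "nn_integral (mixture M S w) (\<lambda>x. c * u x) = c * nn_integral (mixture M S w) u"
    using mQ by (rule nn_integral_cmult)
  also have "\<dots> = (\<Sum>P\<in>S. c * (ennreal (w P) * nn_integral P u))"
    unfolding mult.IH by (rule sum_distrib_left)
  also have "\<dots> = (\<Sum>P\<in>S. ennreal (w P) * nn_integral P (\<lambda>x. c * u x))"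
  proof (rule sum.cong[OF refl])
    fix P assume "P \<in> S"
    then show "c * (ennreal (w P) * nn_integral P u) = ennreal (w P) * nn_integral P (\<lambda>x. c * u x)"
      using nn_integral_cmult[OF mP] by (simp add: mult.left_commute)
  qed
  finally show ?case .
next
  case (add u v)
  have mQ: "u \<in> borel_measurable (mixture M S w)" "v \<in> borel_measurable (mixture M S w)"
    using \<open>u \<in> borel_measurable M\<close> \<open>v \<in> borel_measurable M\<close> measurable_cong_sets[OF mixture_sets(1) refl] by blast+
  have mP: "u \<in> borel_measurable P" "v \<in> borel_measurable P" if "P \<in> S" for P
    using \<open>u \<in> borel_measurable M\<close> \<open>v \<in> borel_measurable M\<close> measurable_cong_sets[OF sub[OF that] refl] by blast+
  have "nn_integral (mixture M S w) (\<lambda>x. v x + u x) = nn_integral (mixture M S w) v + nn_integral (mixture M S w) u"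
    by (rule nn_integral_add[OF mQ(2) mQ(1)])
  also have "\<dots> = (\<Sum>P\<in>S. ennreal (w P) * nn_integral P v + ennreal (w P) * nn_integral P u)"
    unfolding add.IH by (rule sum.distrib[symmetric])
  also have "\<dots> = (\<Sum>P\<in>S. ennreal (w P) * nn_integral P (\<lambda>x. v x + u x))"
  proof (rule sum.cong[OF refl])
    fix P assume "P \<in> S"
    then show "ennreal (w P) * nn_integral P v + ennreal (w P) * nn_integral P u = ennreal (w P) * nn_integral P (\<lambda>x. v x + u x)"
      using nn_integral_add[OF mP(2) mP(1)] by (simp add: distrib_left)
  qed
  finally show ?case .
next
  case (seq U)
  have mQ: "U i \<in> borel_measurable (mixture M S w)" for i
    using seq.hyps(1) measurable_cong_sets[OF mixture_sets(1) refl] by blast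
  have mP: "U i \<in> borel_measurable P" if "P \<in> S" for P i
    using seq.hyps(1) measurable_cong_sets[OF sub[OF that] refl] by blast
  have fe: "(SUP i. U i) = (\<lambda>x. SUP i. U i x)" by (simp add: fun_eq_iff image_comp)
  have "nn_integral (mixture M S w) (SUP i. U i) = (SUP i. nn_integral (mixture M S w) (U i))"
    unfolding fe using mQ \<open>incseq U\<close> by (intro nn_integral_monotone_convergence_SUP) auto
  also have "\<dots> = (SUP i. \<Sum>P\<in>S. ennreal (w P) * nn_integral P (U i))"
    using seq.IH by simp
  also have "\<dots> = (\<Sum>P\<in>S. SUP i. ennreal (w P) * nn_integral P (U i))"
  proof (rule ennreal_SUP_sum)
    fix P assume "P \<in> S"
    show "incseq (\<lambda>i. ennreal (w P) * nn_integral P (U i))"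
      using \<open>incseq U\<close> by (auto simp: incseq_def le_fun_def intro!: mult_left_mono nn_integral_mono)
  qed
  also have "\<dots> = (\<Sum>P\<in>S. ennreal (w P) * nn_integral P (SUP i. U i))"
  proof (rule sum.cong[OF refl])
    fix P assume P: "P \<in> S"
    have "nn_integral P (SUP i. U i) = (SUP i. nn_integral P (U i))"
      unfolding fe using mP[OF P] \<open>incseq U\<close> by (intro nn_integral_monotone_convergence_SUP) auto
    then show "(SUP i. ennreal (w P) * nn_integral P (U i)) = ennreal (w P) * nn_integral P (SUP i. U i)"
      by (simp add: SUP_mult_left_ennreal)
  qed
  finally show ?case .
qed



lemma nn_norm_less_top:
  fixes f :: "'a \<Rightarrow> real"
  assumes "integrable P f"
  shows "(\<integral>\<^sup>+x. ennreal (norm (f x)) \<partial>P) < top"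
  using assms by (simp add: integrable_iff_bounded)

lemma mixture_integral:
  fixes f :: "'a \<Rightarrow> real"
  assumes fin: "finite S"
    and sub: "\<And>P. P \<in> S \<Longrightarrow> sets P = sets M"
    and wpos: "\<And>P. P \<in> S \<Longrightarrow> 0 \<le> w P"
    and fm: "f \<in> borel_measurable M"
    and fi: "\<And>P. P \<in> S \<Longrightarrow> integrable P f"
  shows "integrable (mixture M S w) f"
    "integral\<^sup>L (mixture M S w) f = (\<Sum>P\<in>S. w P * integral\<^sup>L P f)"
proof -
  have fQ: "f \<in> borel_measurable (mixture M S w)"
    using fm measurable_cong_sets[OF mixture_sets(1) refl] by blast
  have fP: "f \<in> borel_measurable P" if "P \<in> S" for P
    using fm measurable_cong_sets[OF sub[OF that] refl] by blast
  have nnQ: "\<And>g. g \<in> borel_measurable M \<Longrightarrow> nn_integral (mixture M S w) g = (\<Sum>P\<in>S. ennreal (w P) * nn_integral P g)"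
    by (rule mixture_nn_integral[OF fin sub])
  have m1: "(\<lambda>x. ennreal (norm (f x))) \<in> borel_measurable M" using fm by measurable
  have m2: "(\<lambda>x. ennreal (f x)) \<in> borel_measurable M" using fm by measurable
  have m3: "(\<lambda>x. ennreal (- f x)) \<in> borel_measurable M" using fm by measurable
  have lt1: "(\<integral>\<^sup>+x. ennreal (f x) \<partial>P) < top" if "P \<in> S" for P
  proof -
    have "(\<integral>\<^sup>+x. ennreal (f x) \<partial>P) \<le> (\<integral>\<^sup>+x. ennreal (norm (f x)) \<partial>P)"
      by (intro nn_integral_mono) (simp add: ennreal_leI)
    then show ?thesis using nn_norm_less_top[OF fi[OF that]] by (simp add: le_less_trans)
  qed
  have lt2: "(\<integral>\<^sup>+x. ennreal (- f x) \<partial>P) < top" if "P \<in> S" for P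
  proof -
    have "(\<integral>\<^sup>+x. ennreal (- f x) \<partial>P) \<le> (\<integral>\<^sup>+x. ennreal (norm (f x)) \<partial>P)"
      by (intro nn_integral_mono) (simp add: ennreal_leI)
    then show ?thesis using nn_norm_less_top[OF fi[OF that]] by (simp add: le_less_trans)
  qed
  have "(\<integral>\<^sup>+x. ennreal (norm (f x)) \<partial>mixture M S w) < top"
    unfolding nnQ[OF m1] using fin nn_norm_less_top[OF fi]
    by (simp add: ennreal_mult_less_top)
  then show intQ: "integrable (mixture M S w) f"
    using fQ by (simp add: integrable_iff_bounded)
  have "integral\<^sup>L (mixture M S w) f
      = enn2real (\<Sum>P\<in>S. ennreal (w P) * (\<integral>\<^sup>+x. ennreal (f x) \<partial>P))
      - enn2real (\<Sum>P\<in>S. ennreal (w P) * (\<integral>\<^sup>+x. ennreal (- f x) \<partial>P))"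
    unfolding real_lebesgue_integral_def[OF intQ] nnQ[OF m2] nnQ[OF m3] ..
  also have "\<dots> = (\<Sum>P\<in>S. w P * enn2real (\<integral>\<^sup>+x. ennreal (f x) \<partial>P))
      - (\<Sum>P\<in>S. w P * enn2real (\<integral>\<^sup>+x. ennreal (- f x) \<partial>P))"
    using lt1 lt2 wpos
    by (simp add: enn2real_sum ennreal_mult_less_top enn2real_mult)
  also have "\<dots> = (\<Sum>P\<in>S. w P * integral\<^sup>L P f)"
    unfolding sum_subtractf[symmetric] right_diff_distrib[symmetric]
    using fi by (intro sum.cong refl) (simp add: real_lebesgue_integral_def)
  finally show "integral\<^sup>L (mixture M S w) f = (\<Sum>P\<in>S. w P * integral\<^sup>L P f)" .
qed

lemma mixture_prob:
  assumes fin: "finite S"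
    and sub: "\<And>P. P \<in> S \<Longrightarrow> prob_space P \<and> sets P = sets M"
    and wpos: "\<And>P. P \<in> S \<Longrightarrow> 0 \<le> w P" and w1: "sum w S = 1"
  shows "prob_space (mixture M S w)"
proof
  have "emeasure (mixture M S w) (space M) = (\<Sum>P\<in>S. ennreal (w P) * emeasure P (space M))"
    using sub by (intro mixture_emeasure[OF fin]) auto
  also have "\<dots> = (\<Sum>P\<in>S. ennreal (w P))"
    using sub by (intro sum.cong refl) (metis mult.right_neutral prob_space.emeasure_space_1 sets_eq_imp_space_eq)
  also have "\<dots> = 1" using w1 wpos by (simp add: sum_ennreal[symmetric])
  finally show "emeasure (mixture M S w) (space (mixture M S w)) = 1" by (simp add: mixture_sets)
qed




lemma sep2:
  fixes p q :: "'m \<Rightarrow> real"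
  assumes ne: "Ps \<noteq> {}"
    and hyp: "\<And>t. 0 \<le> t \<Longrightarrow> t \<le> 1 \<Longrightarrow> V \<le> (SUP P\<in>Ps. (1 - t) * p P + t * q P)"
    and eps: "0 < \<epsilon>"
  shows "\<exists>S w. finite S \<and> S \<noteq> {} \<and> S \<subseteq> Ps \<and> (\<forall>P\<in>S. 0 \<le> w P) \<and> sum w S = 1
      \<and> V - \<epsilon> \<le> (\<Sum>P\<in>S. w P * p P) \<and> V - \<epsilon> \<le> (\<Sum>P\<in>S. w P * q P)"
proof -
  define Z where "Z = (\<lambda>P. (p P, q P)) ` Ps"
  define H where "H = convex hull Z"
  define K where "K = {y::real\<times>real. V - \<epsilon> \<le> fst y \<and> V - \<epsilon> \<le> snd y}"
  have "H \<inter> K \<noteq> {}"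
  proof
    assume disj: "H \<inter> K = {}"
    have cH: "convex H" unfolding H_def by (rule convex_convex_hull)
    have cb: "c \<le> u * x + v * y" if "0 \<le> u" "0 \<le> v" "u + v = 1" "c \<le> x" "c \<le> y" for u v x y c :: real
    proof -
      have "u * c \<le> u * x" "v * c \<le> v * y" using that by (simp_all add: mult_left_mono)
      then have "u * c + v * c \<le> u * x + v * y" by simp
      moreover have "u * c + v * c = c" using that(3) by (metis distrib_right mult_1)
      ultimately show ?thesis by simp
    qed
    have cK: "convex K" unfolding K_def convex_def by (auto intro: cb)
    have neH: "H \<noteq> {}" unfolding H_def Z_def using ne by simp
    have kK: "(V - \<epsilon> + r, V - \<epsilon> + s) \<in> K" if "0 \<le> r" "0 \<le> s" for r s
      unfolding K_def using that by simp
    have neK: "K \<noteq> {}" using kK[of 0 0] by auto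
    obtain a \<beta> where a: "a \<noteq> 0" and aH: "\<forall>x\<in>H. inner a x \<le> \<beta>" and aK: "\<forall>x\<in>K. inner a x \<ge> \<beta>"
      using separating_hyperplane_sets[OF cH cK neH neK disj] by blast
    obtain a1 a2 where a12: "a = (a1, a2)" by (cases a)
    obtain P0 where P0: "P0 \<in> Ps" using ne by blast
    have h0H: "(p P0, q P0) \<in> H" unfolding H_def Z_def using P0 by (simp add: hull_inc)
    have h0: "a1 * p P0 + a2 * q P0 \<le> \<beta>" using aH[rule_format, OF h0H] a12 by simp
    have kr: "\<beta> \<le> a1 * (V - \<epsilon> + r) + a2 * (V - \<epsilon> + s)" if "0 \<le> r" "0 \<le> s" for r s
      using aK[rule_format, OF kK[OF that]] a12 by simp
    define C where "C = \<bar>\<beta>\<bar> + \<bar>a1 * (V - \<epsilon>)\<bar> + \<bar>a2 * (V - \<epsilon>)\<bar> + 1"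
    have C0: "0 \<le> C" unfolding C_def by simp
    have a1: "0 \<le> a1"
    proof (rule ccontr)
      assume "\<not> 0 \<le> a1"
      then have n: "a1 < 0" by simp
      have "\<beta> \<le> a1 * (V - \<epsilon> + C / (- a1)) + a2 * (V - \<epsilon> + 0)"
        using n C0 by (intro kr) (auto simp: divide_nonneg_neg divide_le_0_iff)
      also have "\<dots> = a1 * (V - \<epsilon>) - C + a2 * (V - \<epsilon>)"
        using n by (simp add: field_simps)
      finally show False unfolding C_def by linarith
    qed
    have a2: "0 \<le> a2"
    proof (rule ccontr)
      assume "\<not> 0 \<le> a2"
      then have n: "a2 < 0" by simp
      have "\<beta> \<le> a1 * (V - \<epsilon> + 0) + a2 * (V - \<epsilon> + C / (- a2))"
        using n C0 by (intro kr) (auto simp: divide_nonneg_neg divide_le_0_iff)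
      also have "\<dots> = a1 * (V - \<epsilon>) - C + a2 * (V - \<epsilon>)"
        using n by (simp add: field_simps)
      finally show False unfolding C_def by linarith
    qed
    define s where "s = a1 + a2"
    have s: "0 < s" using a a1 a2 a12 unfolding s_def by (auto simp: zero_prod_def)
    define t where "t = a2 / s"
    have t01: "0 \<le> t" "t \<le> 1" using a1 a2 s unfolding t_def s_def by (auto simp: field_simps)
    have "(SUP P\<in>Ps. (1 - t) * p P + t * q P) \<le> \<beta> / s"
    proof (rule cSUP_least[OF ne])
      fix P assume "P \<in> Ps"
      then have pH: "(p P, q P) \<in> H" unfolding H_def Z_def by (simp add: hull_inc)
      have "a1 * p P + a2 * q P \<le> \<beta>" using aH[rule_format, OF pH] a12 by simp
      moreover have "(1 - t) * p P + t * q P = (a1 * p P + a2 * q P) / s"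
      proof -
        have "1 - t = a1 / s" using s unfolding t_def s_def by (simp add: field_simps)
        then show ?thesis unfolding t_def by (simp add: add_divide_distrib)
      qed
      ultimately show "(1 - t) * p P + t * q P \<le> \<beta> / s"
        using s by (simp add: divide_right_mono)
    qed
    also have "\<beta> / s \<le> V - \<epsilon>"
      using kr[of 0 0] s unfolding s_def by (simp add: field_simps)
    finally show False using hyp[OF t01] eps by linarith
  qed
  then obtain y where yH: "y \<in> H" and yK: "y \<in> K" by blast
  obtain T u where T: "finite T" "T \<subseteq> Z" "\<forall>x\<in>T. 0 \<le> u x" "sum u T = 1" "(\<Sum>v\<in>T. u v *\<^sub>R v) = y"
    using yH unfolding H_def convex_hull_explicit by blast
  have "\<forall>z\<in>T. \<exists>P\<in>Ps. z = (p P, q P)" using T(2) unfolding Z_def by blast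
  then obtain f where f: "\<And>z. z \<in> T \<Longrightarrow> f z \<in> Ps \<and> z = (p (f z), q (f z))" by metis
  have inj: "inj_on f T" by (rule inj_onI) (metis f)
  define w where "w P = u (p P, q P)" for P
  have sumT: "(\<Sum>P\<in>f ` T. w P * h P) = (\<Sum>z\<in>T. u z * h (f z))" for h
    unfolding sum.reindex[OF inj] o_def w_def by (intro sum.cong refl) (metis f)
  have "sum w (f ` T) = 1" using sumT[of "\<lambda>_. 1"] T(4) by simp
  moreover have "(\<Sum>P\<in>f ` T. w P * p P) = fst y"
    unfolding sumT T(5)[symmetric] fst_sum by (intro sum.cong refl) (metis f fst_conv fst_scaleR real_scaleR_def)
  moreover have "(\<Sum>P\<in>f ` T. w P * q P) = snd y"
    unfolding sumT T(5)[symmetric] snd_sum by (intro sum.cong refl) (metis f snd_conv snd_scaleR real_scaleR_def)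
  moreover have "f ` T \<noteq> {}" using T(4) by auto
  moreover have "\<forall>P\<in>f ` T. 0 \<le> w P" using T(3) f unfolding w_def by auto
  ultimately show ?thesis using T(1) f yK unfolding K_def
    by (intro exI[of _ "f ` T"] exI[of _ w]) auto
qed




lemma conv_le:
  fixes h w :: "'m \<Rightarrow> real"
  assumes "\<forall>P\<in>S. 0 \<le> w P" "sum w S = 1" "\<And>P. P \<in> S \<Longrightarrow> h P \<le> hi"
  shows "(\<Sum>P\<in>S. w P * h P) \<le> hi"
proof -
  have "(\<Sum>P\<in>S. w P * h P) \<le> (\<Sum>P\<in>S. w P * hi)"
    using assms by (intro sum_mono mult_left_mono) auto
  also have "\<dots> = hi" using assms(2) by (simp add: sum_distrib_right[symmetric])
  finally show ?thesis .
qed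

lemma conv_ge:
  fixes h w :: "'m \<Rightarrow> real"
  assumes "\<forall>P\<in>S. 0 \<le> w P" "sum w S = 1" "\<And>P. P \<in> S \<Longrightarrow> lo \<le> h P"
  shows "lo \<le> (\<Sum>P\<in>S. w P * h P)"
proof -
  have "(\<Sum>P\<in>S. w P * lo) \<le> (\<Sum>P\<in>S. w P * h P)"
    using assms by (intro sum_mono mult_left_mono) auto
  moreover have "(\<Sum>P\<in>S. w P * lo) = lo" using assms(2) by (simp add: sum_distrib_right[symmetric])
  ultimately show ?thesis by simp
qed

lemma lin_comb:
  fixes w A B C :: "'m \<Rightarrow> real"
  assumes "sum w S = 1"
  shows "(\<Sum>P\<in>S. w P * (A P - u * B P - v * C P + u * v))
     = (\<Sum>P\<in>S. w P * A P) - u * (\<Sum>P\<in>S. w P * B P) - v * (\<Sum>P\<in>S. w P * C P) + u * v"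
proof -
  have "(\<Sum>P\<in>S. w P * (A P - u * B P - v * C P + u * v))
     = (\<Sum>P\<in>S. w P * A P) - (\<Sum>P\<in>S. u * (w P * B P)) - (\<Sum>P\<in>S. v * (w P * C P)) + (\<Sum>P\<in>S. u * v * w P)"
    by (simp add: sum.distrib sum_subtractf algebra_simps)
  also have "\<dots> = (\<Sum>P\<in>S. w P * A P) - u * (\<Sum>P\<in>S. w P * B P) - v * (\<Sum>P\<in>S. w P * C P) + u * v * sum w S"
    by (simp add: sum_distrib_left)
  finally show ?thesis using assms by simp
qed




lemma abstract_cov:
  fixes Ps Co :: "'m set" and mx my mxy :: "'m \<Rightarrow> real" and K :: real
  assumes ne: "Ps \<noteq> {}"
    and bnd: "\<And>P. P \<in> Ps \<or> P \<in> Co \<Longrightarrow> \<bar>mx P\<bar> \<le> K \<and> \<bar>my P\<bar> \<le> K \<and> \<bar>mxy P\<bar> \<le> K"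
    and coI: "\<And>S w. finite S \<Longrightarrow> S \<noteq> {} \<Longrightarrow> S \<subseteq> Ps \<Longrightarrow> (\<forall>P\<in>S. 0 \<le> w P) \<Longrightarrow> sum w S = 1 \<Longrightarrow>
       \<exists>Q\<in>Co. mx Q = (\<Sum>P\<in>S. w P * mx P) \<and> my Q = (\<Sum>P\<in>S. w P * my P) \<and> mxy Q = (\<Sum>P\<in>S. w P * mxy P)"
    and coE: "\<And>Q. Q \<in> Co \<Longrightarrow> \<exists>S w. finite S \<and> S \<noteq> {} \<and> S \<subseteq> Ps \<and> (\<forall>P\<in>S. 0 \<le> w P) \<and> sum w S = 1 \<and>
       mx Q = (\<Sum>P\<in>S. w P * mx P) \<and> my Q = (\<Sum>P\<in>S. w P * my P) \<and> mxy Q = (\<Sum>P\<in>S. w P * mxy P)"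
  shows "(SUP \<mu>2\<in>{(INF P\<in>Ps. my P)..(SUP P\<in>Ps. my P)}. INF \<mu>1\<in>{(INF P\<in>Ps. mx P)..(SUP P\<in>Ps. mx P)}.
            SUP P\<in>Ps. mxy P - \<mu>1 * my P - \<mu>2 * mx P + \<mu>1 * \<mu>2)
         = (SUP Q\<in>Co. mxy Q - mx Q * my Q)"
proof -
  obtain P0 where P0: "P0 \<in> Ps" using ne by blast
  have K0: "0 \<le> K" using bnd[of P0] P0 by linarith
  define g where "g P u v = mxy P - u * my P - v * mx P + u * v" for P u v
  define B0 where "B0 = K + 3 * K * K"
  have gb: "-B0 \<le> g P u v \<and> g P u v \<le> B0" if "P \<in> Ps \<or> P \<in> Co" "\<bar>u\<bar> \<le> K" "\<bar>v\<bar> \<le> K" for P u v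
  proof -
    have b: "\<bar>mx P\<bar> \<le> K" "\<bar>my P\<bar> \<le> K" "\<bar>mxy P\<bar> \<le> K" using bnd[OF that(1)] by auto
    have "\<bar>u * my P\<bar> \<le> K * K" unfolding abs_mult using b that by (intro mult_mono) auto
    moreover have "\<bar>v * mx P\<bar> \<le> K * K" unfolding abs_mult using b that by (intro mult_mono) auto
    moreover have "\<bar>u * v\<bar> \<le> K * K" unfolding abs_mult using b that by (intro mult_mono) auto
    ultimately show ?thesis using b unfolding g_def B0_def abs_le_iff by linarith
  qed
  define G where "G u v = (SUP P\<in>Ps. g P u v)" for u v
  have bddG: "bdd_above ((\<lambda>P. g P u v) ` Ps)" if "\<bar>u\<bar> \<le> K" "\<bar>v\<bar> \<le> K" for u v
    using gb that by (intro bdd_aboveI2[where M=B0]) auto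
  have Gle: "g P u v \<le> G u v" if "P \<in> Ps" "\<bar>u\<bar> \<le> K" "\<bar>v\<bar> \<le> K" for P u v
    unfolding G_def using bddG[OF that(2,3)] that(1) by (rule cSUP_upper2) simp
  have Gb: "-B0 \<le> G u v \<and> G u v \<le> B0" if "\<bar>u\<bar> \<le> K" "\<bar>v\<bar> \<le> K" for u v
  proof
    show "-B0 \<le> G u v" using Gle[OF P0 that] gb[of P0 u v] P0 that by linarith
    show "G u v \<le> B0" unfolding G_def using gb that by (intro cSUP_least[OF ne]) auto
  qed
  have hb: "-K \<le> mx P \<and> mx P \<le> K \<and> -K \<le> my P \<and> my P \<le> K" if "P \<in> Ps" for P
  proof -
    have "\<bar>mx P\<bar> \<le> K" "\<bar>my P\<bar> \<le> K" using bnd that by auto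
    then show ?thesis by linarith
  qed
  have bmx: "bdd_above (mx ` Ps)" "bdd_below (mx ` Ps)" "bdd_above (my ` Ps)" "bdd_below (my ` Ps)"
    using hb by (auto intro!: bdd_aboveI2[where M=K] bdd_belowI2[where m="-K"])
  define a where "a = (INF P\<in>Ps. mx P)"
  define b where "b = (SUP P\<in>Ps. mx P)"
  define c where "c = (INF P\<in>Ps. my P)"
  define d where "d = (SUP P\<in>Ps. my P)"
  have amx: "a \<le> mx P" "mx P \<le> b" "c \<le> my P" "my P \<le> d" if "P \<in> Ps" for P
    unfolding a_def b_def c_def d_def using that bmx
    by (auto intro: cINF_lower cSUP_upper)
  have abK: "-K \<le> a" "b \<le> K" "-K \<le> c" "d \<le> K"
    unfolding a_def b_def c_def d_def using hb ne
    by (auto intro!: cINF_greatest cSUP_least)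
  have ab: "a \<le> b" "c \<le> d" using amx[OF P0] by linarith+
  have inK: "\<bar>u\<bar> \<le> K" if "a \<le> u" "u \<le> b" for u using that abK ab by linarith
  have inK2: "\<bar>u\<bar> \<le> K" if "c \<le> u" "u \<le> d" for u using that abK ab by linarith
  have coQ: "a \<le> mx Q \<and> mx Q \<le> b \<and> c \<le> my Q \<and> my Q \<le> d \<and> (\<forall>u v. \<bar>u\<bar> \<le> K \<longrightarrow> \<bar>v\<bar> \<le> K \<longrightarrow> g Q u v \<le> G u v)"
    if Q: "Q \<in> Co" for Q
  proof -
    obtain S w where S: "finite S" "S \<noteq> {}" "S \<subseteq> Ps" "\<forall>P\<in>S. 0 \<le> w P" "sum w S = 1"
      and e: "mx Q = (\<Sum>P\<in>S. w P * mx P)" "my Q = (\<Sum>P\<in>S. w P * my P)" "mxy Q = (\<Sum>P\<in>S. w P * mxy P)"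
      using coE[OF Q] by blast
    have "a \<le> mx Q" unfolding e using S amx by (intro conv_ge) auto
    moreover have "mx Q \<le> b" unfolding e using S amx by (intro conv_le) auto
    moreover have "c \<le> my Q" unfolding e using S amx by (intro conv_ge) auto
    moreover have "my Q \<le> d" unfolding e using S amx by (intro conv_le) auto
    moreover have "g Q u v \<le> G u v" if "\<bar>u\<bar> \<le> K" "\<bar>v\<bar> \<le> K" for u v
    proof -
      have "g Q u v = (\<Sum>P\<in>S. w P * g P u v)"
        unfolding g_def e using lin_comb[OF S(5)] by simp
      also have "\<dots> \<le> G u v" using S Gle that by (intro conv_le) auto
      finally show ?thesis .
    qed
    ultimately show ?thesis by blast
  qed
  define F where "F v = (INF u\<in>{a..b}. G u v)" for v
  have bddF: "bdd_below ((\<lambda>u. G u v) ` {a..b})" if "\<bar>v\<bar> \<le> K" for v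
    using Gb inK that by (intro bdd_belowI2[where m="-B0"]) auto
  have Fle: "F v \<le> G u v" if "a \<le> u" "u \<le> b" "\<bar>v\<bar> \<le> K" for u v
    unfolding F_def using bddF[OF that(3)] that(1,2) by (intro cINF_lower) auto
  have Fb: "F v \<le> B0" if "\<bar>v\<bar> \<le> K" for v
    using Fle[of a v] Gb[of a v] ab that inK[of a] by auto
  have bddF2: "bdd_above (F ` {c..d})" using Fb inK2 by (intro bdd_aboveI2[where M=B0]) auto
  define C where "C Q = mxy Q - mx Q * my Q" for Q
  have Cb: "C Q \<le> B0" if "Q \<in> Co" for Q
  proof -
    have b: "\<bar>mx Q\<bar> \<le> K" "\<bar>my Q\<bar> \<le> K" "\<bar>mxy Q\<bar> \<le> K" using bnd that by auto
    have "\<bar>mx Q * my Q\<bar> \<le> K * K" unfolding abs_mult using b by (intro mult_mono) auto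
    moreover have "0 \<le> K * K" using K0 by simp
    ultimately show ?thesis using b unfolding C_def B0_def abs_le_iff by linarith
  qed
  have bddC: "bdd_above (C ` Co)" using Cb by (intro bdd_aboveI2[where M=B0]) auto
  have neCo: "Co \<noteq> {}"
    using coI[of "{P0}" "\<lambda>_. 1"] P0 by auto
  have CQg: "C Q = g Q u v - (mx Q - u) * (my Q - v)" for Q u v
    unfolding C_def g_def by (simp add: algebra_simps)
  have "(SUP Q\<in>Co. C Q) \<le> (SUP v\<in>{c..d}. F v)"
  proof (rule cSUP_least[OF neCo])
    fix Q assume Q: "Q \<in> Co"
    note cq = coQ[OF Q]
    have "C Q \<le> F (my Q)"
      unfolding F_def
    proof (rule cINF_greatest)
      show "{a..b} \<noteq> {}" using ab by simp
      fix u assume "u \<in> {a..b}"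
      then have u: "\<bar>u\<bar> \<le> K" using inK by auto
      have "C Q = g Q u (my Q)" using CQg[of Q u "my Q"] by simp
      also have "\<dots> \<le> G u (my Q)" using cq u inK2[of "my Q"] by auto
      finally show "C Q \<le> G u (my Q)" .
    qed
    also have "\<dots> \<le> (SUP v\<in>{c..d}. F v)"
      using cq bddF2 by (intro cSUP_upper) auto
    finally show "C Q \<le> (SUP v\<in>{c..d}. F v)" .
  qed
  moreover have "(SUP v\<in>{c..d}. F v) \<le> (SUP Q\<in>Co. C Q)"
  proof (rule cSUP_least)
    show "{c..d} \<noteq> {}" using ab by simp
    fix v assume "v \<in> {c..d}"
    then have v: "c \<le> v" "v \<le> d" "\<bar>v\<bar> \<le> K" using inK2 by auto
    show "F v \<le> (SUP Q\<in>Co. C Q)"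
    proof (rule field_le_epsilon)
      fix \<epsilon> :: real assume eps: "0 < \<epsilon>"
      have hyp: "F v \<le> (SUP P\<in>Ps. (1 - t) * g P a v + t * g P b v)" if t: "0 \<le> t" "t \<le> 1" for t
      proof -
        define u where "u = (1 - t) * a + t * b"
        have "u - a = t * (b - a)" "b - u = (1 - t) * (b - a)" unfolding u_def by (simp_all add: algebra_simps)
        then have u: "a \<le> u" "u \<le> b" using t ab by (metis diff_ge_0_iff_ge mult_nonneg_nonneg)+
        have gaff: "g P u v = (1 - t) * g P a v + t * g P b v" for P
          unfolding g_def u_def by (simp add: algebra_simps)
        have "F v \<le> G u v" using Fle[OF u v(3)] .
        also have "\<dots> = (SUP P\<in>Ps. (1 - t) * g P a v + t * g P b v)"
          unfolding G_def by (rule SUP_cong[OF refl]) (rule gaff)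
        finally show ?thesis .
      qed
      obtain S w where S: "finite S" "S \<noteq> {}" "S \<subseteq> Ps" "\<forall>P\<in>S. 0 \<le> w P" "sum w S = 1"
        and s1: "F v - \<epsilon> \<le> (\<Sum>P\<in>S. w P * g P a v)" and s2: "F v - \<epsilon> \<le> (\<Sum>P\<in>S. w P * g P b v)"
        using sep2[OF ne hyp eps] by blast
      obtain Q where Q: "Q \<in> Co" and e: "mx Q = (\<Sum>P\<in>S. w P * mx P)" "my Q = (\<Sum>P\<in>S. w P * my P)" "mxy Q = (\<Sum>P\<in>S. w P * mxy P)"
        using coI[OF S] by blast
      have gQ: "g Q u v = (\<Sum>P\<in>S. w P * g P u v)" for u
        unfolding g_def e using lin_comb[OF S(5)] by simp
      note cq = coQ[OF Q]
      have "F v - \<epsilon> \<le> C Q"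
      proof (cases "v \<le> my Q")
        case True
        have "(mx Q - b) * (my Q - v) \<le> 0" using cq True by (intro mult_nonpos_nonneg) auto
        then show ?thesis using CQg[of Q b v] gQ[of b] s2 by linarith
      next
        case False
        have "(mx Q - a) * (my Q - v) \<le> 0" using cq False by (intro mult_nonneg_nonpos) auto
        then show ?thesis using CQg[of Q a v] gQ[of a] s1 by linarith
      qed
      also have "C Q \<le> (SUP Q\<in>Co. C Q)" using bddC Q by (rule cSUP_upper2) simp
      finally show "F v \<le> (SUP Q\<in>Co. C Q) + \<epsilon>" by simp
    qed
  qed
  ultimately have "(SUP v\<in>{c..d}. F v) = (SUP Q\<in>Co. C Q)" by linarith
  then show ?thesis unfolding F_def G_def g_def C_def a_def b_def c_def d_def .
qed




lemma mom:
  fixes X Y :: "'a \<Rightarrow> real"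
  assumes ps: "prob_space P" and Xm: "X \<in> borel_measurable P" and Ym: "Y \<in> borel_measurable P"
    and X2: "integrable P (\<lambda>\<omega>. (X \<omega>)\<^sup>2)" and Y2: "integrable P (\<lambda>\<omega>. (Y \<omega>)\<^sup>2)"
  shows "integrable P X" "integrable P Y" "integrable P (\<lambda>\<omega>. X \<omega> * Y \<omega>)"
    "integral\<^sup>L P (\<lambda>\<omega>. (X \<omega> - u) * (Y \<omega> - v)) =
       integral\<^sup>L P (\<lambda>\<omega>. X \<omega> * Y \<omega>) - u * integral\<^sup>L P Y - v * integral\<^sup>L P X + u * v"
    "cov_P P X Y = integral\<^sup>L P (\<lambda>\<omega>. X \<omega> * Y \<omega>) - integral\<^sup>L P X * integral\<^sup>L P Y"
    "\<bar>integral\<^sup>L P X\<bar> \<le> 1 + integral\<^sup>L P (\<lambda>\<omega>. (X \<omega>)\<^sup>2)"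
    "\<bar>integral\<^sup>L P Y\<bar> \<le> 1 + integral\<^sup>L P (\<lambda>\<omega>. (Y \<omega>)\<^sup>2)"
    "\<bar>integral\<^sup>L P (\<lambda>\<omega>. X \<omega> * Y \<omega>)\<bar> \<le> integral\<^sup>L P (\<lambda>\<omega>. (X \<omega>)\<^sup>2) + integral\<^sup>L P (\<lambda>\<omega>. (Y \<omega>)\<^sup>2)"
proof -
  interpret prob_space P by (fact ps)
  show iX: "integrable P X" using square_integrable_imp_integrable[OF Xm X2] .
  show iY: "integrable P Y" using square_integrable_imp_integrable[OF Ym Y2] .
  have pb: "\<bar>x * y\<bar> \<le> x\<^sup>2 + y\<^sup>2" for x y :: real
  proof -
    have "0 \<le> (\<bar>x\<bar> - \<bar>y\<bar>)\<^sup>2" by simp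
    then have "2 * (\<bar>x\<bar> * \<bar>y\<bar>) \<le> x\<^sup>2 + y\<^sup>2" by (simp add: power2_eq_square algebra_simps)
    moreover have "0 \<le> \<bar>x\<bar> * \<bar>y\<bar>" by simp
    ultimately show ?thesis unfolding abs_mult by linarith
  qed
  have iS: "integrable P (\<lambda>\<omega>. (X \<omega>)\<^sup>2 + (Y \<omega>)\<^sup>2)" using X2 Y2 by simp
  show iXY: "integrable P (\<lambda>\<omega>. X \<omega> * Y \<omega>)"
    by (rule Bochner_Integration.integrable_bound[OF iS]) (use Xm Ym pb in \<open>auto\<close>)
  have form: "integral\<^sup>L P (\<lambda>\<omega>. (X \<omega> - u) * (Y \<omega> - v)) =
       integral\<^sup>L P (\<lambda>\<omega>. X \<omega> * Y \<omega>) - u * integral\<^sup>L P Y - v * integral\<^sup>L P X + u * v" for u v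
  proof -
  have eq: "(\<lambda>\<omega>. (X \<omega> - u) * (Y \<omega> - v)) = (\<lambda>\<omega>. X \<omega> * Y \<omega> - u * Y \<omega> - v * X \<omega> + u * v)"
    by (simp add: fun_eq_iff algebra_simps)
  show "integral\<^sup>L P (\<lambda>\<omega>. (X \<omega> - u) * (Y \<omega> - v)) =
       integral\<^sup>L P (\<lambda>\<omega>. X \<omega> * Y \<omega>) - u * integral\<^sup>L P Y - v * integral\<^sup>L P X + u * v"
    unfolding eq using iX iY iXY by (simp add: prob_space)
  qed
  then show "integral\<^sup>L P (\<lambda>\<omega>. (X \<omega> - u) * (Y \<omega> - v)) =
       integral\<^sup>L P (\<lambda>\<omega>. X \<omega> * Y \<omega>) - u * integral\<^sup>L P Y - v * integral\<^sup>L P X + u * v" .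
  show "cov_P P X Y = integral\<^sup>L P (\<lambda>\<omega>. X \<omega> * Y \<omega>) - integral\<^sup>L P X * integral\<^sup>L P Y"
    unfolding cov_P_def form by (simp add: algebra_simps)
  have ab: "\<bar>x\<bar> \<le> 1 + x\<^sup>2" for x :: real
  proof (cases "\<bar>x\<bar> \<le> 1")
    case True
    have "0 \<le> x\<^sup>2" by simp
    then show ?thesis using True by linarith
  next
    case False
    have "\<bar>x\<bar> * 1 \<le> \<bar>x\<bar> * \<bar>x\<bar>" using False by (intro mult_left_mono) auto
    moreover have "\<bar>x\<bar> * \<bar>x\<bar> = x\<^sup>2" by (simp add: power2_eq_square)
    ultimately show ?thesis by linarith
  qed
  have "integral\<^sup>L P X \<le> integral\<^sup>L P (\<lambda>\<omega>. 1 + (X \<omega>)\<^sup>2)"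
    using iX X2 ab by (intro integral_mono) (auto simp: abs_le_iff)
  moreover have "- integral\<^sup>L P X \<le> integral\<^sup>L P (\<lambda>\<omega>. 1 + (X \<omega>)\<^sup>2)"
    unfolding integral_minus[symmetric] using iX X2 ab by (intro integral_mono) (auto simp: abs_le_iff)
  ultimately show "\<bar>integral\<^sup>L P X\<bar> \<le> 1 + integral\<^sup>L P (\<lambda>\<omega>. (X \<omega>)\<^sup>2)"
    using X2 by (simp add: prob_space)
  have "integral\<^sup>L P Y \<le> integral\<^sup>L P (\<lambda>\<omega>. 1 + (Y \<omega>)\<^sup>2)"
    using iY Y2 ab by (intro integral_mono) (auto simp: abs_le_iff)
  moreover have "- integral\<^sup>L P Y \<le> integral\<^sup>L P (\<lambda>\<omega>. 1 + (Y \<omega>)\<^sup>2)"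
    unfolding integral_minus[symmetric] using iY Y2 ab by (intro integral_mono) (auto simp: abs_le_iff)
  ultimately show "\<bar>integral\<^sup>L P Y\<bar> \<le> 1 + integral\<^sup>L P (\<lambda>\<omega>. (Y \<omega>)\<^sup>2)"
    using Y2 by (simp add: prob_space)
  have "integral\<^sup>L P (\<lambda>\<omega>. X \<omega> * Y \<omega>) \<le> integral\<^sup>L P (\<lambda>\<omega>. (X \<omega>)\<^sup>2 + (Y \<omega>)\<^sup>2)"
    using iXY iS pb by (intro integral_mono) (auto simp: abs_le_iff)
  moreover have "- integral\<^sup>L P (\<lambda>\<omega>. X \<omega> * Y \<omega>) \<le> integral\<^sup>L P (\<lambda>\<omega>. (X \<omega>)\<^sup>2 + (Y \<omega>)\<^sup>2)"
    unfolding integral_minus[symmetric] using iXY iS pb by (intro integral_mono) (auto simp: abs_le_iff)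
  ultimately show "\<bar>integral\<^sup>L P (\<lambda>\<omega>. X \<omega> * Y \<omega>)\<bar> \<le> integral\<^sup>L P (\<lambda>\<omega>. (X \<omega>)\<^sup>2) + integral\<^sup>L P (\<lambda>\<omega>. (Y \<omega>)\<^sup>2)"
    using X2 Y2 by simp
qed




lemma lower_exp_INF: "lower_exp Ps Z = (INF P\<in>Ps. integral\<^sup>L P Z)"
  unfolding lower_exp_def upper_exp_def Inf_real_def by (simp add: image_comp o_def)

lemma part1:
  fixes M :: "'a measure" and Ps :: "'a measure set" and X Y :: "'a \<Rightarrow> real"
  assumes Ps_ne: "Ps \<noteq> {}"
    and Ps_prob: "\<And>P. P \<in> Ps \<Longrightarrow> prob_space P \<and> sets P = sets M"
    and X_meas: "X \<in> borel_measurable M" and Y_meas: "Y \<in> borel_measurable M"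
    and X2_int: "\<And>P. P \<in> Ps \<Longrightarrow> integrable P (\<lambda>\<omega>. (X \<omega>)\<^sup>2)"
    and Y2_int: "\<And>P. P \<in> Ps \<Longrightarrow> integrable P (\<lambda>\<omega>. (Y \<omega>)\<^sup>2)"
    and X2_bdd: "bdd_above ((\<lambda>P. integral\<^sup>L P (\<lambda>\<omega>. (X \<omega>)\<^sup>2)) ` Ps)"
    and Y2_bdd: "bdd_above ((\<lambda>P. integral\<^sup>L P (\<lambda>\<omega>. (Y \<omega>)\<^sup>2)) ` Ps)"
  shows "upper_cov Ps X Y = (SUP P\<in>measure_co M Ps. cov_P P X Y)"
proof -
  define mx where "mx P = integral\<^sup>L P X" for P
  define my where "my P = integral\<^sup>L P Y" for P
  define mxy where "mxy P = integral\<^sup>L P (\<lambda>\<omega>. X \<omega> * Y \<omega>)" for P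
  define sx where "sx P = integral\<^sup>L P (\<lambda>\<omega>. (X \<omega>)\<^sup>2)" for P
  define sy where "sy P = integral\<^sup>L P (\<lambda>\<omega>. (Y \<omega>)\<^sup>2)" for P
  define Co where "Co = measure_co M Ps"
  define good where "good Q \<longleftrightarrow> prob_space Q \<and> sets Q = sets M \<and> integrable Q (\<lambda>\<omega>. (X \<omega>)\<^sup>2) \<and> integrable Q (\<lambda>\<omega>. (Y \<omega>)\<^sup>2)" for Q
  have measQ: "X \<in> borel_measurable Q" "Y \<in> borel_measurable Q" if "sets Q = sets M" for Q
    using X_meas Y_meas measurable_cong_sets[OF that refl] by blast+
  have momQ: "integrable Q X \<and> integrable Q Y \<and> integrable Q (\<lambda>\<omega>. X \<omega> * Y \<omega>) \<and>
    (\<forall>u v. integral\<^sup>L Q (\<lambda>\<omega>. (X \<omega> - u) * (Y \<omega> - v)) = mxy Q - u * my Q - v * mx Q + u * v) \<and>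
    cov_P Q X Y = mxy Q - mx Q * my Q \<and> \<bar>mx Q\<bar> \<le> 1 + sx Q \<and> \<bar>my Q\<bar> \<le> 1 + sy Q \<and> \<bar>mxy Q\<bar> \<le> sx Q + sy Q
    \<and> 0 \<le> sx Q \<and> 0 \<le> sy Q"
    if "good Q" for Q
  proof -
    have g: "prob_space Q" "sets Q = sets M" "integrable Q (\<lambda>\<omega>. (X \<omega>)\<^sup>2)" "integrable Q (\<lambda>\<omega>. (Y \<omega>)\<^sup>2)"
      using that unfolding good_def by auto
    note m = mom[OF g(1) measQ[OF g(2)] g(3,4)]
    show ?thesis using m unfolding mx_def my_def mxy_def sx_def sy_def by auto
  qed
  have goodPs: "good P" if "P \<in> Ps" for P
    using Ps_prob X2_int Y2_int that unfolding good_def by auto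
  have X2m: "(\<lambda>\<omega>. (X \<omega>)\<^sup>2) \<in> borel_measurable M" using X_meas by measurable
  have Y2m: "(\<lambda>\<omega>. (Y \<omega>)\<^sup>2) \<in> borel_measurable M" using Y_meas by measurable
  have XYm: "(\<lambda>\<omega>. X \<omega> * Y \<omega>) \<in> borel_measurable M" using X_meas Y_meas by measurable
  have mixf: "good Q \<and> mx Q = (\<Sum>P\<in>S. w P * mx P) \<and> my Q = (\<Sum>P\<in>S. w P * my P)
      \<and> mxy Q = (\<Sum>P\<in>S. w P * mxy P) \<and> sx Q = (\<Sum>P\<in>S. w P * sx P) \<and> sy Q = (\<Sum>P\<in>S. w P * sy P)"
    if S: "finite S" "S \<noteq> {}" "S \<subseteq> Ps" "\<forall>P\<in>S. 0 \<le> w P" "sum w S = 1" and Q: "Q = mixture M S w" for S w Q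
  proof -
    have sub: "\<And>P. P \<in> S \<Longrightarrow> sets P = sets M" using S Ps_prob by auto
    have wp: "\<And>P. P \<in> S \<Longrightarrow> 0 \<le> w P" using S by auto
    have gS: "\<And>P. P \<in> S \<Longrightarrow> good P" using goodPs S by auto
    have intX: "\<And>P. P \<in> S \<Longrightarrow> integrable P X" and intY: "\<And>P. P \<in> S \<Longrightarrow> integrable P Y"
      and intXY: "\<And>P. P \<in> S \<Longrightarrow> integrable P (\<lambda>\<omega>. X \<omega> * Y \<omega>)"
      using momQ gS by blast+
    have intX2: "\<And>P. P \<in> S \<Longrightarrow> integrable P (\<lambda>\<omega>. (X \<omega>)\<^sup>2)"
      and intY2: "\<And>P. P \<in> S \<Longrightarrow> integrable P (\<lambda>\<omega>. (Y \<omega>)\<^sup>2)"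
      using gS unfolding good_def by auto
    note iX = mixture_integral[of S M w X, OF S(1) sub wp X_meas intX]
    note iY = mixture_integral[of S M w Y, OF S(1) sub wp Y_meas intY]
    note iXY = mixture_integral[of S M w, OF S(1) sub wp XYm intXY]
    note iX2 = mixture_integral[of S M w, OF S(1) sub wp X2m intX2]
    note iY2 = mixture_integral[of S M w, OF S(1) sub wp Y2m intY2]
    have "prob_space Q" unfolding Q using S Ps_prob by (intro mixture_prob) auto
    moreover have "sets Q = sets M" unfolding Q by (rule mixture_sets)
    ultimately have "good Q" unfolding good_def Q using iX2(1) iY2(1) by simp
    then show ?thesis unfolding Q mx_def my_def mxy_def sx_def sy_def
      using iX(2) iY(2) iXY(2) iX2(2) iY2(2) by simp
  qed
  have coE': "\<exists>S w. finite S \<and> S \<noteq> {} \<and> S \<subseteq> Ps \<and> (\<forall>P\<in>S. 0 \<le> w P) \<and> sum w S = 1 \<and> Q = mixture M S w"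
    if "Q \<in> Co" for Q
    using that unfolding Co_def measure_co_def by blast
  define BX where "BX = (SUP P\<in>Ps. sx P)"
  define BY where "BY = (SUP P\<in>Ps. sy P)"
  have sxB: "sx P \<le> BX" "sy P \<le> BY" if "P \<in> Ps" for P
    unfolding BX_def BY_def sx_def sy_def using X2_bdd Y2_bdd that by (auto intro: cSUP_upper)
  have goodC: "good Q \<and> sx Q \<le> BX \<and> sy Q \<le> BY" if "P \<in> Ps \<or> Q \<in> Co" "P \<in> Ps \<Longrightarrow> Q = P" for P Q
  proof (cases "Q \<in> Co")
    case True
    then obtain S w where S: "finite S" "S \<noteq> {}" "S \<subseteq> Ps" "\<forall>P\<in>S. 0 \<le> w P" "sum w S = 1" "Q = mixture M S w"
      using coE' by blast
    note mf = mixf[OF S]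
    have "sx Q \<le> BX" using mf S sxB by (auto intro!: conv_le)
    moreover have "sy Q \<le> BY" using mf S sxB by (auto intro!: conv_le)
    ultimately show ?thesis using mf by simp
  next
    case False
    then show ?thesis using that goodPs sxB by auto
  qed
  obtain P0 where P0: "P0 \<in> Ps" using Ps_ne by blast
  have BX0: "0 \<le> BX" "0 \<le> BY" using sxB[OF P0] momQ[OF goodPs[OF P0]] by linarith+
  define K where "K = 1 + BX + BY"
  have bnd: "\<bar>mx Q\<bar> \<le> K \<and> \<bar>my Q\<bar> \<le> K \<and> \<bar>mxy Q\<bar> \<le> K" if "Q \<in> Ps \<or> Q \<in> Co" for Q
  proof -
    have gq: "good Q \<and> sx Q \<le> BX \<and> sy Q \<le> BY" using goodC[of Q Q] that by blast
    then show ?thesis using momQ[of Q] BX0 unfolding K_def by auto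
  qed
  have coI: "\<exists>Q\<in>Co. mx Q = (\<Sum>P\<in>S. w P * mx P) \<and> my Q = (\<Sum>P\<in>S. w P * my P) \<and> mxy Q = (\<Sum>P\<in>S. w P * mxy P)"
    if "finite S" "S \<noteq> {}" "S \<subseteq> Ps" "\<forall>P\<in>S. 0 \<le> w P" "sum w S = 1" for S w
  proof -
    have "mixture M S w \<in> Co" unfolding Co_def measure_co_def using that by blast
    then show ?thesis using mixf[OF that refl] by blast
  qed
  have coE: "\<exists>S w. finite S \<and> S \<noteq> {} \<and> S \<subseteq> Ps \<and> (\<forall>P\<in>S. 0 \<le> w P) \<and> sum w S = 1 \<and>
       mx Q = (\<Sum>P\<in>S. w P * mx P) \<and> my Q = (\<Sum>P\<in>S. w P * my P) \<and> mxy Q = (\<Sum>P\<in>S. w P * mxy P)"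
    if QC: "Q \<in> Co" for Q
  proof -
    obtain S w where S: "finite S" "S \<noteq> {}" "S \<subseteq> Ps" "\<forall>P\<in>S. 0 \<le> w P" "sum w S = 1" "Q = mixture M S w"
      using coE'[OF QC] by blast
    show ?thesis using mixf[OF S] S by blast
  qed
  note E = abstract_cov[where mx=mx and my=my and mxy=mxy, OF Ps_ne bnd coI coE]
  have ue: "upper_exp Ps (\<lambda>\<omega>. (X \<omega> - u) * (Y \<omega> - v)) = (SUP P\<in>Ps. mxy P - u * my P - v * mx P + u * v)" for u v
    unfolding upper_exp_def using momQ goodPs by (intro SUP_cong refl) blast
  have mi: "mean_interval Ps X = {(INF P\<in>Ps. mx P)..(SUP P\<in>Ps. mx P)}"
    "mean_interval Ps Y = {(INF P\<in>Ps. my P)..(SUP P\<in>Ps. my P)}"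
    unfolding mean_interval_def lower_exp_INF upper_exp_def mx_def my_def by simp_all
  have cv: "(SUP P\<in>measure_co M Ps. cov_P P X Y) = (SUP Q\<in>Co. mxy Q - mx Q * my Q)"
    unfolding Co_def[symmetric] using momQ goodC by (intro SUP_cong refl) blast
  show ?thesis unfolding upper_cov_def ue mi cv using E .
qed




lemma INF_neg_real: "(INF x\<in>A. f x) = - (SUP x\<in>A. - f x :: real)"
  unfolding Inf_real_def by (simp add: image_comp o_def)

theorem theorem3p5:
  fixes M :: "'a measure" and Ps :: "'a measure set" and X Y :: "'a \<Rightarrow> real"
  assumes Ps_ne: "Ps \<noteq> {}"
    and Ps_prob: "\<And>P. P \<in> Ps \<Longrightarrow> prob_space P \<and> sets P = sets M"
    and X_meas: "X \<in> borel_measurable M" and Y_meas: "Y \<in> borel_measurable M"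
    and X2_int: "\<And>P. P \<in> Ps \<Longrightarrow> integrable P (\<lambda>\<omega>. (X \<omega>)\<^sup>2)"
    and Y2_int: "\<And>P. P \<in> Ps \<Longrightarrow> integrable P (\<lambda>\<omega>. (Y \<omega>)\<^sup>2)"
    and X2_bdd: "bdd_above ((\<lambda>P. integral\<^sup>L P (\<lambda>\<omega>. (X \<omega>)\<^sup>2)) ` Ps)"
    and Y2_bdd: "bdd_above ((\<lambda>P. integral\<^sup>L P (\<lambda>\<omega>. (Y \<omega>)\<^sup>2)) ` Ps)"
  shows "upper_cov Ps X Y = (SUP P\<in>measure_co M Ps. cov_P P X Y)
    \<and> lower_cov Ps X Y = (INF P\<in>measure_co M Ps. cov_P P X Y)"
proof
  show "upper_cov Ps X Y = (SUP P\<in>measure_co M Ps. cov_P P X Y)"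
    by (rule part1[OF assms])
  define Y' where "Y' = (\<lambda>\<omega>. - Y \<omega>)"
  have Y'm: "Y' \<in> borel_measurable M" unfolding Y'_def using Y_meas by measurable
  have Y'sq: "(\<lambda>\<omega>. (Y' \<omega>)\<^sup>2) = (\<lambda>\<omega>. (Y \<omega>)\<^sup>2)" unfolding Y'_def by simp
  have p1: "upper_cov Ps X Y' = (SUP P\<in>measure_co M Ps. cov_P P X Y')"
    by (rule part1[OF Ps_ne Ps_prob X_meas Y'm X2_int _ X2_bdd]) (use Y2_int Y2_bdd in \<open>simp_all add: Y'sq\<close>)
  have covneg: "cov_P P X Y' = - cov_P P X Y" for P
  proof -
    have "(\<lambda>\<omega>. (X \<omega> - integral\<^sup>L P X) * (- Y \<omega> - - integral\<^sup>L P Y))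
        = (\<lambda>\<omega>. - ((X \<omega> - integral\<^sup>L P X) * (Y \<omega> - integral\<^sup>L P Y)))"
      by (simp add: fun_eq_iff algebra_simps)
    then show ?thesis unfolding cov_P_def Y'_def integral_minus by simp
  qed
  have mi: "mean_interval Ps Y' = uminus ` mean_interval Ps Y"
  proof -
    have a: "lower_exp Ps Y' = - upper_exp Ps Y" unfolding lower_exp_def Y'_def by simp
    have b: "upper_exp Ps Y' = - lower_exp Ps Y" unfolding lower_exp_def Y'_def by simp
    show ?thesis unfolding mean_interval_def a b image_uminus_atLeastAtMost ..
  qed
  have "upper_cov Ps X Y' = (SUP v\<in>mean_interval Ps Y. INF u\<in>mean_interval Ps X.
      upper_exp Ps (\<lambda>\<omega>. - ((X \<omega> - u) * (Y \<omega> - v))))"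
    unfolding upper_cov_def mi image_comp o_def
    by (intro SUP_cong INF_cong refl arg_cong[where f="upper_exp Ps"]) (simp add: Y'_def fun_eq_iff algebra_simps)
  also have "\<dots> = - lower_cov Ps X Y"
    unfolding lower_cov_def INF_neg_real[of _ "mean_interval Ps Y"] by (simp add: INF_neg_real)
  finally have l: "lower_cov Ps X Y = - upper_cov Ps X Y'" by simp
  show "lower_cov Ps X Y = (INF P\<in>measure_co M Ps. cov_P P X Y)"
    unfolding l p1 covneg INF_neg_real[of _ "measure_co M Ps"] ..
qed


end
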